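(* Let ${}^*\mathbb{Z}=\mathbb{Z}^I/\mathcal{U}$ be an ultrapower of $\mathbb{Z}$ with respect to a nonprincipal ultrafilter $\mathcal{U}$ on a countably infinite set $I$. The map $\mathfrak{m}\mapsto\mathcal{F}(\mathfrak{m})$ is a one-to-one correspondence between the maximal ideals of ${}^*\mathbb{Z}$ and the maximal filters on $\operatorname{pr}({}^*\mathbb{Z})$. Moreover, for a maximal ideal $\mathfrak{m}$, $\mathcal{F}(\mathfrak{m})$ is principal if and only if $\mathfrak{m}=p\,{}^*\mathbb{Z}$ for some $p\in\mathcal{P}({}^*\mathbb{N})$.
   Context: ${}^*\mathbb{N}=\mathbb{N}^I/\mathcal{U}$. For $x,y\in{}^*\mathbb{Z}$, $x\mid y$ means $y=zx$ for some $z\in{}^*\mathbb{Z}$. $\mathcal{P}({}^*\mathbb{N})$ is the set of $p\in{}^*\mathbb{N}$, $p\neq1$, whose only divisors in ${}^*\mathbb{Z}$ are $\pm1,\pm p$. For $n\in{}^*\mathbb{Z}$, $\operatorname{pr}(n)=\{p\in\mathcal{P}({}^*\mathbb{N}):p\mid n\}$ and $\operatorname{pr}({}^*\mathbb{Z})=\{\operatorname{pr}(n):n\in{}^*\mathbb{Z}\}$. A filter on $\operatorname{pr}({}^*\mathbb{Z})$ is $\mathcal{F}\subseteq\operatorname{pr}({}^*\mathbb{Z})$ with (a) $\emptyset\notin\mathcal{F}$; (b) closed under intersections of two members; (c) if $\operatorname{pr}(n)\in\mathcal{F}$ and $\operatorname{pr}(n)\subseteq\operatorname{pr}(m)$ then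 $\operatorname{pr}(m)\in\mathcal{F}$. It is maximal if no filter properly contains it, and principal if there is $n\in{}^*\mathbb{Z}$ such that for $S\in\operatorname{pr}({}^*\mathbb{Z})$, $S\in\mathcal{F}$ iff $\operatorname{pr}(n)\subseteq S$. For an ideal $J$, $\mathcal{F}(J)=\{\operatorname{pr}(n):n\in J\}$. *)

theory Defs
  imports "HOL-Algebra.Ideal" "HOL-Library.Countable_Set"
begin

definition ultrafilter_on :: "'i set \<Rightarrow> 'i set set \<Rightarrow> bool" where
  "ultrafilter_on I U \<longleftrightarrow>
     U \<subseteq> Pow I \<and> I \<in> U \<and> {} \<notin> U \<and>
     (\<forall>A\<in>U. \<forall>B\<in>U. A \<inter> B \<in> U) \<and>
     (\<forall>A\<in>U. \<forall>B. A \<subseteq> B \<and> B \<subseteq> I \<longrightarrow> B \<in> U) \<and>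
     (\<forall>A. A \<subseteq> I \<longrightarrow> A \<in> U \<or> I - A \<in> U)"

definition nonprincipal_ultrafilter_on :: "'i set \<Rightarrow> 'i set set \<Rightarrow> bool" where
  "nonprincipal_ultrafilter_on I U \<longleftrightarrow> ultrafilter_on I U \<and> (\<forall>i\<in>I. {i} \<notin> U)"

definition uprel :: "'i set \<Rightarrow> 'i set set \<Rightarrow> (('i \<Rightarrow> int) \<times> ('i \<Rightarrow> int)) set" where
  "uprel I U = {(f, g). f \<in> I \<rightarrow>\<^sub>E UNIV \<and> g \<in> I \<rightarrow>\<^sub>E UNIV \<and> {i\<in>I. f i = g i} \<in> U}"

definition upclass :: "'i set \<Rightarrow> 'i set set \<Rightarrow> ('i \<Rightarrow> int) \<Rightarrow> ('i \<Rightarrow> int) set" where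
  "upclass I U f = uprel I U `` {restrict f I}"

definition zstar :: "'i set \<Rightarrow> 'i set set \<Rightarrow> ('i \<Rightarrow> int) set ring" where
  "zstar I U =
    \<lparr> carrier = (I \<rightarrow>\<^sub>E UNIV) // uprel I U,
      monoid.mult = (\<lambda>x y. \<Union>f\<in>x. \<Union>g\<in>y. upclass I U (\<lambda>i. f i * g i)),
      one = upclass I U (\<lambda>i. 1),
      zero = upclass I U (\<lambda>i. 0),
      add = (\<lambda>x y. \<Union>f\<in>x. \<Union>g\<in>y. upclass I U (\<lambda>i. f i + g i)) \<rparr>"

definition nstar :: "'i set \<Rightarrow> 'i set set \<Rightarrow> ('i \<Rightarrow> int) set set" where
  "nstar I U = {x \<in> carrier (zstar I U). \<exists>f\<in>x. \<forall>i\<in>I. f i \<ge> 0}"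

definition zdvd :: "'i set \<Rightarrow> 'i set set \<Rightarrow> ('i \<Rightarrow> int) set \<Rightarrow> ('i \<Rightarrow> int) set \<Rightarrow> bool" where
  "zdvd I U x y \<longleftrightarrow> (\<exists>z\<in>carrier (zstar I U). y = z \<otimes>\<^bsub>zstar I U\<^esub> x)"

definition hprimes :: "'i set \<Rightarrow> 'i set set \<Rightarrow> ('i \<Rightarrow> int) set set" where
  "hprimes I U = {p \<in> nstar I U. p \<noteq> \<one>\<^bsub>zstar I U\<^esub> \<and>
     (\<forall>d\<in>carrier (zstar I U). zdvd I U d p \<longrightarrow>
        d \<in> {\<one>\<^bsub>zstar I U\<^esub>, \<ominus>\<^bsub>zstar I U\<^esub> \<one>\<^bsub>zstar I U\<^esub>, p, \<ominus>\<^bsub>zstar I U\<^esub> p})}"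

definition pr :: "'i set \<Rightarrow> 'i set set \<Rightarrow> ('i \<Rightarrow> int) set \<Rightarrow> ('i \<Rightarrow> int) set set" where
  "pr I U n = {p \<in> hprimes I U. zdvd I U p n}"

definition prZ :: "'i set \<Rightarrow> 'i set set \<Rightarrow> ('i \<Rightarrow> int) set set set" where
  "prZ I U = pr I U ` carrier (zstar I U)"

definition pr_filter :: "'i set \<Rightarrow> 'i set set \<Rightarrow> ('i \<Rightarrow> int) set set set \<Rightarrow> bool" where
  "pr_filter I U F \<longleftrightarrow> F \<subseteq> prZ I U \<and> {} \<notin> F \<and>
     (\<forall>S\<in>F. \<forall>T\<in>F. S \<inter> T \<in> F) \<and>
     (\<forall>S\<in>F. \<forall>T\<in>prZ I U. S \<subseteq> T \<longrightarrow> T \<in> F)"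

definition maximal_pr_filter :: "'i set \<Rightarrow> 'i set set \<Rightarrow> ('i \<Rightarrow> int) set set set \<Rightarrow> bool" where
  "maximal_pr_filter I U F \<longleftrightarrow> pr_filter I U F \<and>
     (\<forall>G. pr_filter I U G \<and> F \<subseteq> G \<longrightarrow> G = F)"

definition principal_pr_filter :: "'i set \<Rightarrow> 'i set set \<Rightarrow> ('i \<Rightarrow> int) set set set \<Rightarrow> bool" where
  "principal_pr_filter I U F \<longleftrightarrow>
     (\<exists>n\<in>carrier (zstar I U). \<forall>S\<in>prZ I U. S \<in> F \<longleftrightarrow> pr I U n \<subseteq> S)"

definition ideal_filter :: "'i set \<Rightarrow> 'i set set \<Rightarrow> ('i \<Rightarrow> int) set set \<Rightarrow> ('i \<Rightarrow> int) set set set" where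
  "ideal_filter I U J = pr I U ` J"

end

theory Submission
  imports Defs "HOL-Computational_Algebra.Primes"
begin

locale UP =
  fixes I :: "'i set" and U :: "'i set set"
  assumes uf: "ultrafilter_on I U"
begin

abbreviation "R \<equiv> zstar I U"
abbreviation "cls \<equiv> upclass I U"

definition ev :: "('i \<Rightarrow> bool) \<Rightarrow> bool" where
  "ev P \<longleftrightarrow> {i\<in>I. P i} \<in> U"

lemma ev_True: "ev (\<lambda>i. True)"
  using uf unfolding ev_def ultrafilter_on_def by simp

lemma ev_mono: "ev P \<Longrightarrow> (\<And>i. i \<in> I \<Longrightarrow> P i \<Longrightarrow> Q i) \<Longrightarrow> ev Q"
  using uf unfolding ev_def ultrafilter_on_def
  by (smt (verit, best) mem_Collect_eq subsetI)

lemma ev_conj: "ev P \<Longrightarrow> ev Q \<Longrightarrow> ev (\<lambda>i. P i \<and> Q i)"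
proof -
  assume "ev P" "ev Q"
  then have "{i\<in>I. P i} \<inter> {i\<in>I. Q i} \<in> U"
    using uf unfolding ev_def ultrafilter_on_def by blast
  moreover have "{i\<in>I. P i} \<inter> {i\<in>I. Q i} = {i\<in>I. P i \<and> Q i}" by blast
  ultimately show ?thesis unfolding ev_def by simp
qed

lemma ev_False: "\<not> ev (\<lambda>i. False)"
  using uf unfolding ev_def ultrafilter_on_def by simp

lemma ev_cases: "ev P \<or> ev (\<lambda>i. \<not> P i)"
proof -
  have "{i\<in>I. P i} \<subseteq> I" by blast
  then have "{i\<in>I. P i} \<in> U \<or> I - {i\<in>I. P i} \<in> U"
    using uf unfolding ultrafilter_on_def by blast
  moreover have "I - {i\<in>I. P i} = {i\<in>I. \<not> P i}" by blast
  ultimately show ?thesis unfolding ev_def by simp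
qed

lemma ev_disj: "ev (\<lambda>i. P i \<or> Q i) \<Longrightarrow> ev P \<or> ev Q"
proof -
  assume a: "ev (\<lambda>i. P i \<or> Q i)"
  show "ev P \<or> ev Q"
  proof (cases "ev P")
    case False
    then have "ev (\<lambda>i. \<not> P i)" using ev_cases by blast
    from ev_conj[OF a this] have "ev Q" by (rule ev_mono) auto
    then show ?thesis by blast
  qed simp
qed

abbreviation "E \<equiv> (I \<rightarrow>\<^sub>E (UNIV::int set))"

lemma equiv_up: "equiv E (uprel I U)"
proof (rule equivI)
  show "refl_on E (uprel I U)"
    unfolding refl_on_def uprel_def using ev_True unfolding ev_def by auto
  show "sym (uprel I U)"
    unfolding sym_def uprel_def by (auto simp: eq_commute)
  show "trans (uprel I U)"
  proof (rule transI)
    fix x y z assume "(x, y) \<in> uprel I U" "(y, z) \<in> uprel I U"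
    then have "x \<in> E" "z \<in> E" "ev (\<lambda>i. x i = y i)" "ev (\<lambda>i. y i = z i)"
      unfolding uprel_def ev_def by auto
    then have "ev (\<lambda>i. x i = z i)" using ev_conj ev_mono by (smt (verit))
    then show "(x, z) \<in> uprel I U" using \<open>x\<in>E\<close> \<open>z\<in>E\<close> unfolding uprel_def ev_def by auto
  qed
  show "uprel I U \<subseteq> E \<times> E" unfolding uprel_def by auto
qed

lemma cls_eq: "cls f = cls g \<longleftrightarrow> ev (\<lambda>i. f i = g i)"
proof -
  have "cls f = cls g \<longleftrightarrow> (restrict f I, restrict g I) \<in> uprel I U"
    unfolding upclass_def by (rule eq_equiv_class_iff[OF equiv_up]) auto
  also have "\<dots> \<longleftrightarrow> ev (\<lambda>i. f i = g i)"
    unfolding uprel_def ev_def by (auto cong: conj_cong)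
  finally show ?thesis .
qed

lemma mem_cls: "h \<in> cls f \<longleftrightarrow> h \<in> E \<and> ev (\<lambda>i. f i = h i)"
  unfolding upclass_def uprel_def ev_def by (auto cong: conj_cong)

lemma rep_cls: "restrict f I \<in> cls f"
  unfolding mem_cls using ev_True by (auto elim: ev_mono)

lemma carrier_R: "carrier R = range cls"
proof -
  have "E // uprel I U = range cls"
  proof
    show "E // uprel I U \<subseteq> range cls"
    proof
      fix x assume "x \<in> E // uprel I U"
      then obtain f where f: "f \<in> E" "x = uprel I U `` {f}" unfolding quotient_def by blast
      then have "restrict f I = f" by (auto simp: restrict_def PiE_def extensional_def)
      then show "x \<in> range cls" using f unfolding upclass_def by (metis rangeI)
    qed
    show "range cls \<subseteq> E // uprel I U"
    proof
      fix x assume "x \<in> range cls"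
      then obtain f where "x = cls f" by blast
      then show "x \<in> E // uprel I U"
        unfolding upclass_def quotient_def by (intro UN_I[of "restrict f I"]) auto
    qed
  qed
  then show ?thesis unfolding zstar_def by simp
qed

lemma cls_in[simp]: "cls f \<in> carrier R"
  using carrier_R by simp

lemma carrier_E: "x \<in> carrier R \<Longrightarrow> (\<And>f. x = cls f \<Longrightarrow> P) \<Longrightarrow> P"
  using carrier_R by auto

lemma mem_carrier_cls: "x \<in> carrier R \<Longrightarrow> f \<in> x \<Longrightarrow> x = cls f"
  by (metis carrier_E cls_eq mem_cls)

lemma union_const:
  assumes "\<And>a b. a \<in> cls f \<Longrightarrow> b \<in> cls g \<Longrightarrow> cls (h a b) = cls (h f g)"
  shows "(\<Union>a\<in>cls f. \<Union>b\<in>cls g. cls (h a b)) = cls (h f g)"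
proof -
  have "(\<Union>a\<in>cls f. \<Union>b\<in>cls g. cls (h a b)) = (\<Union>a\<in>cls f. \<Union>b\<in>cls g. cls (h f g))"
    using assms by auto
  also have "\<dots> = cls (h f g)" using rep_cls[of f] rep_cls[of g] by blast
  finally show ?thesis .
qed

lemma mult_cls[simp]: "cls f \<otimes>\<^bsub>R\<^esub> cls g = cls (\<lambda>i. f i * g i)"
proof -
  have "(\<Union>a\<in>cls f. \<Union>b\<in>cls g. cls (\<lambda>i. a i * b i)) = cls (\<lambda>i. f i * g i)"
    by (rule union_const[where h = "\<lambda>a b i. a i * b i"])
       (auto simp: mem_cls cls_eq intro: ev_mono[OF ev_conj])
  then show ?thesis unfolding zstar_def by simp
qed

lemma add_cls[simp]: "cls f \<oplus>\<^bsub>R\<^esub> cls g = cls (\<lambda>i. f i + g i)"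
proof -
  have "(\<Union>a\<in>cls f. \<Union>b\<in>cls g. cls (\<lambda>i. a i + b i)) = cls (\<lambda>i. f i + g i)"
    by (rule union_const[where h = "\<lambda>a b i. a i + b i"])
       (auto simp: mem_cls cls_eq intro: ev_mono[OF ev_conj])
  then show ?thesis unfolding zstar_def by simp
qed

lemma one_R: "\<one>\<^bsub>R\<^esub> = cls (\<lambda>i. 1)" unfolding zstar_def by simp
lemma zero_R: "\<zero>\<^bsub>R\<^esub> = cls (\<lambda>i. 0)" unfolding zstar_def by simp

lemma cring_R: "cring R"
proof (rule cringI)
  show "abelian_group R"
  proof (rule abelian_groupI)
    fix x y z assume "x \<in> carrier R" "y \<in> carrier R" "z \<in> carrier R"
    then show "x \<oplus>\<^bsub>R\<^esub> y \<oplus>\<^bsub>R\<^esub> z = x \<oplus>\<^bsub>R\<^esub> (y \<oplus>\<^bsub>R\<^esub> z)"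
      by (auto elim!: carrier_E simp: add.assoc)
  next
    fix x y assume "x \<in> carrier R" "y \<in> carrier R"
    then show "x \<oplus>\<^bsub>R\<^esub> y \<in> carrier R" "x \<oplus>\<^bsub>R\<^esub> y = y \<oplus>\<^bsub>R\<^esub> x"
      by (auto elim!: carrier_E simp: add.commute)
  next
    fix x assume "x \<in> carrier R"
    then show "\<zero>\<^bsub>R\<^esub> \<oplus>\<^bsub>R\<^esub> x = x" by (auto elim!: carrier_E simp: zero_R)
    from \<open>x \<in> carrier R\<close> obtain f where "x = cls f" by (rule carrier_E)
    then have "cls (\<lambda>i. - f i) \<oplus>\<^bsub>R\<^esub> x = \<zero>\<^bsub>R\<^esub>" by (simp add: zero_R)
    then show "\<exists>y\<in>carrier R. y \<oplus>\<^bsub>R\<^esub> x = \<zero>\<^bsub>R\<^esub>" by (metis cls_in)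
  qed (simp add: zero_R)
  show "comm_monoid R"
  proof (rule comm_monoidI)
    fix x y z assume "x \<in> carrier R" "y \<in> carrier R" "z \<in> carrier R"
    then show "x \<otimes>\<^bsub>R\<^esub> y \<otimes>\<^bsub>R\<^esub> z = x \<otimes>\<^bsub>R\<^esub> (y \<otimes>\<^bsub>R\<^esub> z)"
      by (auto elim!: carrier_E simp: mult.assoc)
  next
    fix x y assume "x \<in> carrier R" "y \<in> carrier R"
    then show "x \<otimes>\<^bsub>R\<^esub> y \<in> carrier R" "x \<otimes>\<^bsub>R\<^esub> y = y \<otimes>\<^bsub>R\<^esub> x"
      by (auto elim!: carrier_E simp: mult.commute)
  next
    fix x assume "x \<in> carrier R"
    then show "\<one>\<^bsub>R\<^esub> \<otimes>\<^bsub>R\<^esub> x = x" by (auto elim!: carrier_E simp: one_R)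
  qed (simp add: one_R)
  fix x y z assume "x \<in> carrier R" "y \<in> carrier R" "z \<in> carrier R"
  then show "(x \<oplus>\<^bsub>R\<^esub> y) \<otimes>\<^bsub>R\<^esub> z = x \<otimes>\<^bsub>R\<^esub> z \<oplus>\<^bsub>R\<^esub> y \<otimes>\<^bsub>R\<^esub> z"
    by (auto elim!: carrier_E simp: distrib_right)
qed

lemma neg_cls[simp]: "\<ominus>\<^bsub>R\<^esub> cls f = cls (\<lambda>i. - f i)"
proof -
  interpret cring R by (rule cring_R)
  show ?thesis by (rule minus_equality) (simp_all add: zero_R)
qed

end

context UP
begin

lemma zdvd_cls: "zdvd I U (cls d) (cls n) \<longleftrightarrow> (\<exists>z. ev (\<lambda>i. n i = z i * d i))"
proof
  assume "zdvd I U (cls d) (cls n)"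
  then obtain z where z: "z \<in> carrier R" "cls n = z \<otimes>\<^bsub>R\<^esub> cls d" unfolding zdvd_def by blast
  obtain h where "z = cls h" using z(1) by (rule carrier_E)
  then have "cls n = cls (\<lambda>i. h i * d i)" using z(2) by simp
  then have "ev (\<lambda>i. n i = h i * d i)" by (simp only: cls_eq)
  then show "\<exists>z. ev (\<lambda>i. n i = z i * d i)" by blast
next
  assume "\<exists>z. ev (\<lambda>i. n i = z i * d i)"
  then obtain z where "ev (\<lambda>i. n i = z i * d i)" by blast
  then have "cls n = cls z \<otimes>\<^bsub>R\<^esub> cls d" by (simp add: cls_eq)
  then show "zdvd I U (cls d) (cls n)" unfolding zdvd_def using cls_in[of z] by blast
qed

lemma unit_cls: "ev (\<lambda>i. f i = 1 \<or> f i = -1) \<Longrightarrow> cls f \<in> Units R"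
proof -
  assume a: "ev (\<lambda>i. f i = 1 \<or> f i = -1)"
  have "cls f \<otimes>\<^bsub>R\<^esub> cls f = \<one>\<^bsub>R\<^esub>"
    by (simp add: one_R cls_eq) (rule ev_mono[OF a], auto)
  then show ?thesis unfolding Units_def using cls_in[of f] by blast
qed

lemma hprime_cls:
  assumes pg: "\<And>i. prime (g i)"
  shows "cls g \<in> hprimes I U"
proof -
  have "restrict g I \<in> cls g" by (rule rep_cls)
  moreover have "\<forall>i\<in>I. restrict g I i \<ge> 0" using pg prime_gt_0_int by (simp add: less_imp_le)
  ultimately have nst: "cls g \<in> nstar I U" unfolding nstar_def using cls_in[of g] by blast
  have ne1: "cls g \<noteq> \<one>\<^bsub>R\<^esub>"
  proof
    assume "cls g = \<one>\<^bsub>R\<^esub>"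
    then have "ev (\<lambda>i. g i = 1)" by (simp add: one_R cls_eq)
    then have "ev (\<lambda>i. False)" by (rule ev_mono) (metis not_prime_1 pg)
    then show False using ev_False by blast
  qed
  have dv: "d \<in> {\<one>\<^bsub>R\<^esub>, \<ominus>\<^bsub>R\<^esub> \<one>\<^bsub>R\<^esub>, cls g, \<ominus>\<^bsub>R\<^esub> cls g}"
    if dc: "d \<in> carrier R" and dd: "zdvd I U d (cls g)" for d
  proof -
    obtain h where dh: "d = cls h" using dc by (rule carrier_E)
    then obtain z where z: "ev (\<lambda>i. g i = z i * h i)" using dd zdvd_cls by blast
    have "ev (\<lambda>i. h i = 1 \<or> (h i = -1 \<or> (h i = g i \<or> h i = - g i)))"
    proof (rule ev_mono[OF z])
      fix i assume "g i = z i * h i"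
      then have "h i dvd g i" by simp
      then have "\<bar>h i\<bar> dvd g i" by simp
      then have "\<bar>h i\<bar> = 1 \<or> \<bar>h i\<bar> = g i" using pg[of i] unfolding prime_int_iff by auto
      then show "h i = 1 \<or> (h i = -1 \<or> (h i = g i \<or> h i = - g i))" by (auto simp: abs_if split: if_splits)
    qed
    then have "ev (\<lambda>i. h i = 1) \<or> ev (\<lambda>i. h i = -1 \<or> (h i = g i \<or> h i = - g i))"
      by (rule ev_disj)
    moreover have "ev (\<lambda>i. h i = -1 \<or> (h i = g i \<or> h i = - g i)) \<Longrightarrow>
       ev (\<lambda>i. h i = -1) \<or> ev (\<lambda>i. h i = g i \<or> h i = - g i)"
      by (rule ev_disj)
    moreover have "ev (\<lambda>i. h i = g i \<or> h i = - g i) \<Longrightarrow>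
       ev (\<lambda>i. h i = g i) \<or> ev (\<lambda>i. h i = - g i)"
      by (rule ev_disj)
    moreover have "ev (\<lambda>i. h i = 1) \<Longrightarrow> d = \<one>\<^bsub>R\<^esub>" by (simp only: dh one_R cls_eq)
    moreover have "ev (\<lambda>i. h i = -1) \<Longrightarrow> d = \<ominus>\<^bsub>R\<^esub> \<one>\<^bsub>R\<^esub>" by (simp only: dh one_R neg_cls cls_eq)
    moreover have "ev (\<lambda>i. h i = g i) \<Longrightarrow> d = cls g" by (simp only: dh cls_eq)
    moreover have "ev (\<lambda>i. h i = - g i) \<Longrightarrow> d = \<ominus>\<^bsub>R\<^esub> cls g" by (simp only: dh neg_cls cls_eq)
    ultimately show ?thesis by blast
  qed
  show ?thesis unfolding hprimes_def using nst ne1 dv by blast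
qed

lemma nstar_carrier: "nstar I U \<subseteq> carrier R" unfolding nstar_def by auto

lemma hprimes_carrier: "hprimes I U \<subseteq> carrier R"
  unfolding hprimes_def using nstar_carrier by auto

lemma hprime_notunit: "p \<in> hprimes I U \<Longrightarrow> p \<notin> Units R"
proof
  assume p: "p \<in> hprimes I U" and u: "p \<in> Units R"
  then obtain f where f: "f \<in> p" "\<forall>i\<in>I. f i \<ge> 0" and pc: "p \<in> carrier R" and p1: "p \<noteq> \<one>\<^bsub>R\<^esub>"
    unfolding hprimes_def nstar_def by auto
  have pf: "p = cls f" using mem_carrier_cls[OF pc f(1)] .
  from u obtain y where "y \<in> carrier R" "y \<otimes>\<^bsub>R\<^esub> p = \<one>\<^bsub>R\<^esub>" unfolding Units_def by blast
  then obtain h where "cls (\<lambda>i. h i * f i) = cls (\<lambda>i. 1)" by (auto elim!: carrier_E simp: pf one_R)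
  then have "ev (\<lambda>i. h i * f i = 1)" by (simp add: cls_eq)
  then have "ev (\<lambda>i. f i = 1)" by (rule ev_mono) (use f(2) zmult_eq_1_iff in force)
  then have "p = \<one>\<^bsub>R\<^esub>" by (simp add: pf one_R cls_eq)
  then show False using p1 by blast
qed

lemma notunit_factor:
  assumes n: "n \<in> carrier R" and nu: "n \<notin> Units R"
  shows "\<exists>p\<in>hprimes I U. zdvd I U p n"
proof -
  obtain f where nf: "n = cls f" using n by (rule carrier_E)
  have "\<not> ev (\<lambda>i. f i = 1 \<or> f i = -1)" using unit_cls nu nf by blast
  then have ev1: "ev (\<lambda>i. \<not> (f i = 1 \<or> f i = -1))" using ev_cases by blast
  define g where "g i = (if \<exists>p. prime p \<and> p dvd f i then SOME p. prime p \<and> p dvd f i else (2::int))" for i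
  have pg: "prime (g i)" for i
  proof (cases "\<exists>p. prime p \<and> p dvd f i")
    case True
    then have "prime (SOME p. prime p \<and> p dvd f i) \<and> (SOME p. prime p \<and> p dvd f i) dvd f i"
      by (rule someI_ex)
    then show ?thesis using True unfolding g_def by simp
  next
    case False
    show ?thesis unfolding g_def if_not_P[OF False] by simp
  qed
  have ex: "\<exists>p. prime p \<and> p dvd f i" if "\<not> (f i = 1 \<or> f i = -1)" for i
  proof (cases "f i = 0")
    case True then show ?thesis by (intro exI[of _ 2]) simp
  next
    case False
    moreover have "\<not> is_unit (f i)" using that by (auto simp: abs_if split: if_splits)
    ultimately show ?thesis using prime_divisor_exists by blast
  qed
  have "ev (\<lambda>i. f i = (f i div g i) * g i)"
  proof (rule ev_mono[OF ev1])
    fix i assume "\<not> (f i = 1 \<or> f i = -1)"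
    then have T: "\<exists>p. prime p \<and> p dvd f i" by (rule ex)
    then have "prime (SOME p. prime p \<and> p dvd f i) \<and> (SOME p. prime p \<and> p dvd f i) dvd f i"
      by (rule someI_ex)
    then have "g i dvd f i" using T unfolding g_def by simp
    then show "f i = (f i div g i) * g i" by simp
  qed
  then have "\<exists>z. ev (\<lambda>i. f i = z i * g i)" by (rule exI[of _ "\<lambda>i. f i div g i"])
  then have "zdvd I U (cls g) n" unfolding nf zdvd_cls .
  moreover have "cls g \<in> hprimes I U" by (rule hprime_cls) (rule pg)
  ultimately show ?thesis by blast
qed

lemma bezout_R:
  assumes "a \<in> carrier R" "b \<in> carrier R"
  shows "\<exists>d\<in>carrier R. \<exists>u\<in>carrier R. \<exists>v\<in>carrier R.
           zdvd I U d a \<and> zdvd I U d b \<and> d = u \<otimes>\<^bsub>R\<^esub> a \<oplus>\<^bsub>R\<^esub> v \<otimes>\<^bsub>R\<^esub> b"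
proof -
  obtain f g where fg: "a = cls f" "b = cls g" using assms by (auto elim!: carrier_E)
  define u where "u i = (SOME u. \<exists>v. u * f i + v * g i = gcd (f i) (g i))" for i
  define v where "v i = (SOME v. u i * f i + v * g i = gcd (f i) (g i))" for i
  have uv: "u i * f i + v i * g i = gcd (f i) (g i)" for i
  proof -
    have "\<exists>v. u i * f i + v * g i = gcd (f i) (g i)"
      unfolding u_def by (rule someI_ex) (rule bezout_int)
    then show ?thesis unfolding v_def by (rule someI_ex)
  qed
  have d1: "zdvd I U (cls (\<lambda>i. gcd (f i) (g i))) a"
    unfolding fg zdvd_cls by (intro exI[of _ "\<lambda>i. f i div gcd (f i) (g i)"] ev_mono[OF ev_True]) simp
  have d2: "zdvd I U (cls (\<lambda>i. gcd (f i) (g i))) b"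
    unfolding fg zdvd_cls by (intro exI[of _ "\<lambda>i. g i div gcd (f i) (g i)"] ev_mono[OF ev_True]) simp
  have "cls (\<lambda>i. gcd (f i) (g i)) = cls u \<otimes>\<^bsub>R\<^esub> a \<oplus>\<^bsub>R\<^esub> cls v \<otimes>\<^bsub>R\<^esub> b"
    by (simp add: fg uv)
  then show ?thesis using d1 d2 cls_in by blast
qed

end

context UP
begin

abbreviation "dv \<equiv> zdvd I U"
abbreviation "P \<equiv> hprimes I U"

lemma dvE: "dv a b \<Longrightarrow> (\<And>z. z \<in> carrier R \<Longrightarrow> b = z \<otimes>\<^bsub>R\<^esub> a \<Longrightarrow> thesis) \<Longrightarrow> thesis"
  unfolding zdvd_def by blast

lemma dvI: "z \<in> carrier R \<Longrightarrow> b = z \<otimes>\<^bsub>R\<^esub> a \<Longrightarrow> dv a b"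
  unfolding zdvd_def by blast

lemma dv_trans:
  assumes "a \<in> carrier R" "dv a b" "dv b c" shows "dv a c"
proof -
  interpret cring R by (rule cring_R)
  from assms(2) obtain z1 where z1: "z1 \<in> carrier R" "b = z1 \<otimes>\<^bsub>R\<^esub> a" by (rule dvE)
  from assms(3) obtain z2 where z2: "z2 \<in> carrier R" "c = z2 \<otimes>\<^bsub>R\<^esub> b" by (rule dvE)
  have "c = (z2 \<otimes>\<^bsub>R\<^esub> z1) \<otimes>\<^bsub>R\<^esub> a" using z1 z2 assms(1) by (simp add: m_assoc)
  then show ?thesis using z1 z2 by (intro dvI) auto
qed

lemma dv_add:
  assumes "p \<in> carrier R" "dv p x" "dv p y" shows "dv p (x \<oplus>\<^bsub>R\<^esub> y)"
proof -
  interpret cring R by (rule cring_R)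
  from assms(2) obtain z1 where z1: "z1 \<in> carrier R" "x = z1 \<otimes>\<^bsub>R\<^esub> p" by (rule dvE)
  from assms(3) obtain z2 where z2: "z2 \<in> carrier R" "y = z2 \<otimes>\<^bsub>R\<^esub> p" by (rule dvE)
  have "x \<oplus>\<^bsub>R\<^esub> y = (z1 \<oplus>\<^bsub>R\<^esub> z2) \<otimes>\<^bsub>R\<^esub> p" using z1 z2 assms(1) by (simp add: l_distr)
  then show ?thesis using z1 z2 by (intro dvI) auto
qed

lemma dv_mult:
  assumes "p \<in> carrier R" "dv p x" "a \<in> carrier R" shows "dv p (a \<otimes>\<^bsub>R\<^esub> x)"
proof -
  interpret cring R by (rule cring_R)
  from assms(2) obtain z1 where z1: "z1 \<in> carrier R" "x = z1 \<otimes>\<^bsub>R\<^esub> p" by (rule dvE)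
  have "a \<otimes>\<^bsub>R\<^esub> x = (a \<otimes>\<^bsub>R\<^esub> z1) \<otimes>\<^bsub>R\<^esub> p" using z1 assms by (simp add: m_assoc)
  then show ?thesis using z1 assms by (intro dvI) auto
qed

lemma dv_neg:
  assumes "p \<in> carrier R" "dv p x" shows "dv p (\<ominus>\<^bsub>R\<^esub> x)"
proof -
  interpret cring R by (rule cring_R)
  from assms(2) obtain z1 where z1: "z1 \<in> carrier R" "x = z1 \<otimes>\<^bsub>R\<^esub> p" by (rule dvE)
  have "\<ominus>\<^bsub>R\<^esub> x = (\<ominus>\<^bsub>R\<^esub> z1) \<otimes>\<^bsub>R\<^esub> p" using z1 assms by (simp add: l_minus)
  then show ?thesis using z1 assms by (intro dvI) auto
qed

lemma dv_negL:
  assumes "p \<in> carrier R" "dv (\<ominus>\<^bsub>R\<^esub> p) x" shows "dv p x"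
proof -
  interpret cring R by (rule cring_R)
  from assms(2) obtain z1 where z1: "z1 \<in> carrier R" "x = z1 \<otimes>\<^bsub>R\<^esub> (\<ominus>\<^bsub>R\<^esub> p)" by (rule dvE)
  have "x = (\<ominus>\<^bsub>R\<^esub> z1) \<otimes>\<^bsub>R\<^esub> p" using z1 assms by (simp add: l_minus r_minus)
  then show ?thesis using z1 assms by (intro dvI) auto
qed

lemma dv_refl: "p \<in> carrier R \<Longrightarrow> dv p p"
proof -
  interpret cring R by (rule cring_R)
  assume "p \<in> carrier R" then show ?thesis by (intro dvI[of "\<one>\<^bsub>R\<^esub>"]) auto
qed

lemma dv_zero: "p \<in> carrier R \<Longrightarrow> dv p \<zero>\<^bsub>R\<^esub>"
proof -
  interpret cring R by (rule cring_R)
  assume "p \<in> carrier R" then show ?thesis by (intro dvI[of "\<zero>\<^bsub>R\<^esub>"]) auto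
qed

lemma dv_one_unit:
  assumes "p \<in> carrier R" "dv p \<one>\<^bsub>R\<^esub>" shows "p \<in> Units R"
proof -
  interpret cring R by (rule cring_R)
  from assms(2) obtain z where z: "z \<in> carrier R" "\<one>\<^bsub>R\<^esub> = z \<otimes>\<^bsub>R\<^esub> p" by (rule dvE)
  then have "p \<otimes>\<^bsub>R\<^esub> z = \<one>\<^bsub>R\<^esub>" using assms(1) by (simp add: m_comm)
  then show ?thesis unfolding Units_def using z assms(1) by auto
qed

lemma pr_sub: "pr I U n \<subseteq> P" unfolding pr_def by auto

lemma pr_one: "pr I U \<one>\<^bsub>R\<^esub> = {}"
proof -
  have False if "p \<in> pr I U \<one>\<^bsub>R\<^esub>" for p
  proof -
    have p: "p \<in> P" "dv p \<one>\<^bsub>R\<^esub>" using that unfolding pr_def by auto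
    have "p \<in> carrier R" using p(1) hprimes_carrier by (rule subsetD[rotated])
    then have "p \<in> Units R" using p(2) by (rule dv_one_unit)
    then show False using hprime_notunit[OF p(1)] by simp
  qed
  then show ?thesis by blast
qed

lemma pr_empty: "n \<in> carrier R \<Longrightarrow> pr I U n = {} \<Longrightarrow> n \<in> Units R"
proof (rule ccontr)
  assume "n \<in> carrier R" "pr I U n = {}" "n \<notin> Units R"
  then obtain p where "p \<in> P" "dv p n" using notunit_factor by blast
  then have "p \<in> pr I U n" unfolding pr_def by simp
  then show False using \<open>pr I U n = {}\<close> by simp
qed

lemma pr_zero: "pr I U \<zero>\<^bsub>R\<^esub> = P"
proof -
  have "dv p \<zero>\<^bsub>R\<^esub>" if "p \<in> P" for p
    using that hprimes_carrier by (intro dv_zero) (rule subsetD[rotated])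
  then show ?thesis unfolding pr_def by auto
qed

lemma P_ne: "P \<noteq> {}"
proof -
  have "cls (\<lambda>i. 2) \<in> P" by (rule hprime_cls) simp
  then show ?thesis by blast
qed

lemma pr_gcd:
  assumes "a \<in> carrier R" "b \<in> carrier R" "d \<in> carrier R" "u \<in> carrier R" "v \<in> carrier R"
    "dv d a" "dv d b" "d = u \<otimes>\<^bsub>R\<^esub> a \<oplus>\<^bsub>R\<^esub> v \<otimes>\<^bsub>R\<^esub> b"
  shows "pr I U d = pr I U a \<inter> pr I U b"
proof
  show "pr I U d \<subseteq> pr I U a \<inter> pr I U b"
  proof
    fix p assume "p \<in> pr I U d"
    then have p: "p \<in> P" "dv p d" unfolding pr_def by auto
    then have pc: "p \<in> carrier R" using hprimes_carrier by blast
    have "dv p a" by (rule dv_trans[OF pc p(2) assms(6)])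
    moreover have "dv p b" by (rule dv_trans[OF pc p(2) assms(7)])
    ultimately show "p \<in> pr I U a \<inter> pr I U b" unfolding pr_def using p by blast
  qed
  show "pr I U a \<inter> pr I U b \<subseteq> pr I U d"
  proof
    fix p assume "p \<in> pr I U a \<inter> pr I U b"
    then have p: "p \<in> P" "dv p a" "dv p b" unfolding pr_def by auto
    then have pc: "p \<in> carrier R" using hprimes_carrier by blast
    have "dv p (u \<otimes>\<^bsub>R\<^esub> a)" by (rule dv_mult[OF pc p(2) assms(4)])
    moreover have "dv p (v \<otimes>\<^bsub>R\<^esub> b)" by (rule dv_mult[OF pc p(3) assms(5)])
    ultimately have "dv p d" unfolding assms(8) by (rule dv_add[OF pc])
    then show "p \<in> pr I U d" unfolding pr_def using p by blast
  qed
qed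

lemma gcd_ex:
  assumes "a \<in> carrier R" "b \<in> carrier R"
  obtains d u v where "d \<in> carrier R" "u \<in> carrier R" "v \<in> carrier R"
    "d = u \<otimes>\<^bsub>R\<^esub> a \<oplus>\<^bsub>R\<^esub> v \<otimes>\<^bsub>R\<^esub> b" "pr I U d = pr I U a \<inter> pr I U b"
proof -
  obtain d u v where "d \<in> carrier R" "u \<in> carrier R" "v \<in> carrier R"
    "dv d a" "dv d b" "d = u \<otimes>\<^bsub>R\<^esub> a \<oplus>\<^bsub>R\<^esub> v \<otimes>\<^bsub>R\<^esub> b"
    using bezout_R[OF assms] by blast
  moreover from this have "pr I U d = pr I U a \<inter> pr I U b" using pr_gcd assms by blast
  ultimately show ?thesis using that by blast
qed

lemma prZ_Int: "S \<in> prZ I U \<Longrightarrow> T \<in> prZ I U \<Longrightarrow> S \<inter> T \<in> prZ I U"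
proof -
  assume "S \<in> prZ I U" "T \<in> prZ I U"
  then obtain a b where ab: "a \<in> carrier R" "b \<in> carrier R" "S = pr I U a" "T = pr I U b"
    unfolding prZ_def by blast
  obtain d u v where "d \<in> carrier R" "pr I U d = pr I U a \<inter> pr I U b" using gcd_ex[OF ab(1,2)] by blast
  then show ?thesis using ab unfolding prZ_def by blast
qed

lemma unit_in_ideal: "ideal m R \<Longrightarrow> u \<in> m \<Longrightarrow> u \<in> Units R \<Longrightarrow> m = carrier R"
proof -
  assume m: "ideal m R" and u: "u \<in> m" "u \<in> Units R"
  interpret cring R by (rule cring_R)
  interpret ideal m R by (rule m)
  have "inv\<^bsub>R\<^esub> u \<otimes>\<^bsub>R\<^esub> u \<in> m" using u by (intro I_l_closed) auto
  then have "\<one>\<^bsub>R\<^esub> \<in> m" using u by simp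
  then show ?thesis by (rule one_imp_carrier)
qed

lemma key_max:
  assumes m: "maximalideal m R" and k: "k \<in> carrier R" "k \<notin> m"
  shows "\<exists>x\<in>m. \<exists>a\<in>carrier R. \<one>\<^bsub>R\<^esub> = x \<oplus>\<^bsub>R\<^esub> a \<otimes>\<^bsub>R\<^esub> k"
proof -
  interpret cring R by (rule cring_R)
  interpret maximalideal m R by (rule m)
  define J where "J = m <+>\<^bsub>R\<^esub> PIdl\<^bsub>R\<^esub> k"
  have J: "ideal J R" unfolding J_def by (intro add_ideals is_ideal cgenideal_ideal k(1))
  have z0: "\<zero>\<^bsub>R\<^esub> \<in> PIdl\<^bsub>R\<^esub> k"
    unfolding cgenideal_def using k(1) by (intro CollectI exI[of _ "\<zero>\<^bsub>R\<^esub>"] conjI) simp_all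
  have "m \<subseteq> J"
  proof
    fix x assume xm: "x \<in> m"
    have "x \<oplus>\<^bsub>R\<^esub> \<zero>\<^bsub>R\<^esub> \<in> J" unfolding J_def set_add_def'
      by (rule UN_I[OF xm], rule UN_I[OF z0], simp)
    moreover have "x \<in> carrier R" using xm by (rule Icarr)
    ultimately show "x \<in> J" by simp
  qed
  moreover have "J \<subseteq> carrier R" using J by (rule ideal.Icarr[of J R, THEN subsetI])
  ultimately have JJ: "J = m \<or> J = carrier R" using J by (intro I_maximal)
  moreover have "k \<in> J"
  proof -
    have kk: "k \<in> PIdl\<^bsub>R\<^esub> k" using k(1) by (rule cgenideal_self)
    have "\<zero>\<^bsub>R\<^esub> \<oplus>\<^bsub>R\<^esub> k \<in> J" unfolding J_def set_add_def'
      by (rule UN_I[OF zero_closed], rule UN_I[OF kk], simp)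
    then show ?thesis using k(1) by simp
  qed
  ultimately have "J = carrier R" using k(2) by blast
  then have "\<one>\<^bsub>R\<^esub> \<in> J" by simp
  then obtain x y where xy: "x \<in> m" "y \<in> PIdl\<^bsub>R\<^esub> k" "\<one>\<^bsub>R\<^esub> = x \<oplus>\<^bsub>R\<^esub> y"
    unfolding J_def set_add_def' by blast
  then obtain a where a: "a \<in> carrier R" "y = a \<otimes>\<^bsub>R\<^esub> k" unfolding cgenideal_def by blast
  show ?thesis
  proof (intro bexI)
    show "\<one>\<^bsub>R\<^esub> = x \<oplus>\<^bsub>R\<^esub> a \<otimes>\<^bsub>R\<^esub> k" using xy(3) a(2) by simp
  qed (use a(1) xy(1) in auto)
qed

lemma U1:
  assumes m: "maximalideal m R" and n: "n \<in> m" and k: "k \<in> carrier R" and sub: "pr I U n \<subseteq> pr I U k"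
  shows "k \<in> m"
proof (rule ccontr)
  assume km: "k \<notin> m"
  interpret cring R by (rule cring_R)
  interpret maximalideal m R by (rule m)
  obtain x a where x: "x \<in> m" "a \<in> carrier R" "\<one>\<^bsub>R\<^esub> = x \<oplus>\<^bsub>R\<^esub> a \<otimes>\<^bsub>R\<^esub> k"
    using key_max[OF m k km] by blast
  have nc: "n \<in> carrier R" using n by (rule Icarr)
  have xc: "x \<in> carrier R" using x(1) by (rule Icarr)
  obtain d u v where d: "d \<in> carrier R" "u \<in> carrier R" "v \<in> carrier R"
    "d = u \<otimes>\<^bsub>R\<^esub> n \<oplus>\<^bsub>R\<^esub> v \<otimes>\<^bsub>R\<^esub> x" "pr I U d = pr I U n \<inter> pr I U x"
    by (rule gcd_ex[OF nc xc])
  have "u \<otimes>\<^bsub>R\<^esub> n \<in> m" using n d(2) by (rule I_l_closed)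
  moreover have "v \<otimes>\<^bsub>R\<^esub> x \<in> m" using x(1) d(3) by (rule I_l_closed)
  ultimately have "u \<otimes>\<^bsub>R\<^esub> n \<oplus>\<^bsub>R\<^esub> v \<otimes>\<^bsub>R\<^esub> x \<in> m" by (rule a_closed)
  then have dm: "d \<in> m" using d(4) by simp
  have "pr I U d = {}"
  proof (rule ccontr)
    assume "pr I U d \<noteq> {}"
    then obtain p where p: "p \<in> pr I U d" by blast
    then have "p \<in> pr I U n" "p \<in> pr I U x" using d(5) by auto
    then have "p \<in> pr I U k" "p \<in> pr I U x" using sub by auto
    then have pP: "p \<in> P" and pk: "dv p k" and px: "dv p x" unfolding pr_def by auto
    have pc: "p \<in> carrier R" using pP hprimes_carrier by blast
    have "dv p (x \<oplus>\<^bsub>R\<^esub> a \<otimes>\<^bsub>R\<^esub> k)"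
      by (rule dv_add[OF pc px dv_mult[OF pc pk x(2)]])
    then have "dv p \<one>\<^bsub>R\<^esub>" using x(3) by simp
    then have "p \<in> Units R" using pc dv_one_unit by blast
    then show False using hprime_notunit pP by blast
  qed
  then have "d \<in> Units R" using pr_empty d(1) by blast
  then have "m = carrier R" using unit_in_ideal[OF is_ideal dm] by blast
  then show False using I_notcarr by simp
qed

lemma hp_div: "p \<in> P \<Longrightarrow> d \<in> carrier R \<Longrightarrow> dv d p \<Longrightarrow>
   d \<in> {\<one>\<^bsub>R\<^esub>, \<ominus>\<^bsub>R\<^esub> \<one>\<^bsub>R\<^esub>, p, \<ominus>\<^bsub>R\<^esub> p}"
  unfolding hprimes_def by blast

lemma coprime_pr:
  assumes "x \<in> carrier R" "a \<in> carrier R" "k \<in> carrier R" "\<one>\<^bsub>R\<^esub> = x \<oplus>\<^bsub>R\<^esub> a \<otimes>\<^bsub>R\<^esub> k"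
  shows "pr I U x \<inter> pr I U k = {}"
proof (rule ccontr)
  assume "pr I U x \<inter> pr I U k \<noteq> {}"
  then obtain p where "p \<in> pr I U x" "p \<in> pr I U k" by blast
  then have pP: "p \<in> P" and pk: "dv p k" and px: "dv p x" unfolding pr_def by auto
  have pc: "p \<in> carrier R" using pP hprimes_carrier by blast
  have "dv p (x \<oplus>\<^bsub>R\<^esub> a \<otimes>\<^bsub>R\<^esub> k)"
    by (rule dv_add[OF pc px dv_mult[OF pc pk assms(2)]])
  then have "dv p \<one>\<^bsub>R\<^esub>" using assms(4) by simp
  then have "p \<in> Units R" using pc dv_one_unit by blast
  then show False using hprime_notunit pP by blast
qed

lemma pr_prZ: "n \<in> carrier R \<Longrightarrow> pr I U n \<in> prZ I U"
  unfolding prZ_def by blast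

end

context UP begin
lemma C1:
  assumes m: "maximalideal m R"
  shows "maximal_pr_filter I U (ideal_filter I U m)"
proof -
  interpret cring R by (rule cring_R)
  interpret maximalideal m R by (rule m)
  have mc: "m \<subseteq> carrier R" using Icarr by blast
  have filt: "pr_filter I U (pr I U ` m)"
    unfolding pr_filter_def
  proof (intro conjI ballI impI)
    show "pr I U ` m \<subseteq> prZ I U" using mc unfolding prZ_def by blast
    show "{} \<notin> pr I U ` m"
    proof
      assume "{} \<in> pr I U ` m"
      then obtain n where n: "n \<in> m" "pr I U n = {}" by blast
      then have "n \<in> Units R" using pr_empty mc by blast
      then have "m = carrier R" using unit_in_ideal[OF is_ideal n(1)] by blast
      then show False using I_notcarr by simp
    qed
  next
    fix S T assume "S \<in> pr I U ` m" "T \<in> pr I U ` m"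
    then obtain a b where ab: "a \<in> m" "b \<in> m" "S = pr I U a" "T = pr I U b" by blast
    have ac: "a \<in> carrier R" and bc: "b \<in> carrier R" using ab mc by blast+
    obtain d u v where d: "d \<in> carrier R" "u \<in> carrier R" "v \<in> carrier R"
      "d = u \<otimes>\<^bsub>R\<^esub> a \<oplus>\<^bsub>R\<^esub> v \<otimes>\<^bsub>R\<^esub> b" "pr I U d = pr I U a \<inter> pr I U b"
      by (rule gcd_ex[OF ac bc])
    have "u \<otimes>\<^bsub>R\<^esub> a \<in> m" using ab(1) d(2) by (rule I_l_closed)
    moreover have "v \<otimes>\<^bsub>R\<^esub> b \<in> m" using ab(2) d(3) by (rule I_l_closed)
    ultimately have "u \<otimes>\<^bsub>R\<^esub> a \<oplus>\<^bsub>R\<^esub> v \<otimes>\<^bsub>R\<^esub> b \<in> m" by (rule a_closed)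
    then have dm: "d \<in> m" using d(4) by simp
    show "S \<inter> T \<in> pr I U ` m" using dm d(5) ab(3,4) by (metis image_eqI)
  next
    fix S T assume S: "S \<in> pr I U ` m" and T: "T \<in> prZ I U" and ST: "S \<subseteq> T"
    then obtain n k where nk: "n \<in> m" "S = pr I U n" "k \<in> carrier R" "T = pr I U k"
      unfolding prZ_def by blast
    have "k \<in> m" using U1[OF m nk(1) nk(3)] ST nk by simp
    then show "T \<in> pr I U ` m" using nk(4) by blast
  qed
  have "G = pr I U ` m" if G: "pr_filter I U G" and sub: "pr I U ` m \<subseteq> G" for G
  proof
    show "pr I U ` m \<subseteq> G" by (rule sub)
    show "G \<subseteq> pr I U ` m"
    proof
      fix T assume TG: "T \<in> G"
      then have "T \<in> prZ I U" using G unfolding pr_filter_def by blast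
      then obtain k where k: "k \<in> carrier R" "T = pr I U k" unfolding prZ_def by blast
      show "T \<in> pr I U ` m"
      proof (cases "k \<in> m")
        case True then show ?thesis using k by blast
      next
        case False
        obtain x a where x: "x \<in> m" "a \<in> carrier R" "\<one>\<^bsub>R\<^esub> = x \<oplus>\<^bsub>R\<^esub> a \<otimes>\<^bsub>R\<^esub> k"
          using key_max[OF m k(1) False] by blast
        have xc: "x \<in> carrier R" using x(1) mc by blast
        have "pr I U x \<in> G" using sub x(1) by blast
        then have "pr I U x \<inter> T \<in> G" using TG G unfolding pr_filter_def by blast
        moreover have "pr I U x \<inter> T = {}" using coprime_pr[OF xc x(2) k(1) x(3)] k(2) by simp
        ultimately show ?thesis using G unfolding pr_filter_def by auto
      qed
    qed
  qed
  then show ?thesis unfolding maximal_pr_filter_def ideal_filter_def using filt by simp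
qed

lemma C2:
  assumes m1: "maximalideal m1 R" and m2: "maximalideal m2 R"
    and eq: "ideal_filter I U m1 = ideal_filter I U m2"
  shows "m1 \<subseteq> m2"
proof
  fix n assume n: "n \<in> m1"
  have nc: "n \<in> carrier R" using n by (rule ideal.Icarr[OF maximalideal.axioms(1)[OF m1]])
  have "pr I U n \<in> pr I U ` m1" using n by (rule imageI)
  then have "pr I U n \<in> pr I U ` m2" using eq unfolding ideal_filter_def by simp
  then obtain n' where n': "n' \<in> m2" "pr I U n = pr I U n'" by blast
  show "n \<in> m2" using U1[OF m2 n'(1) nc] n'(2) by simp
qed

lemma F_nonempty:
  assumes F: "maximal_pr_filter I U F" shows "F \<noteq> {}"
proof
  assume F0: "F = {}"
  interpret cring R by (rule cring_R)
  define G where "G = {P}"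
  have zc: "\<zero>\<^bsub>R\<^esub> \<in> carrier R" by simp
  have PZ: "P \<in> prZ I U" using pr_prZ[OF zc] pr_zero by simp
  have "pr_filter I U G" unfolding pr_filter_def G_def
  proof (intro conjI ballI impI)
    show "{P} \<subseteq> prZ I U" using PZ by simp
    show "{} \<notin> {P}" using P_ne by simp
  next
    fix S T assume "S \<in> {P}" "T \<in> {P}" then show "S \<inter> T \<in> {P}" by simp
  next
    fix S T assume "S \<in> {P}" "T \<in> prZ I U" "S \<subseteq> T"
    moreover have "T \<subseteq> P" using \<open>T \<in> prZ I U\<close> pr_sub unfolding prZ_def by blast
    ultimately show "T \<in> {P}" by simp
  qed
  then have "G = F" using F F0 unfolding maximal_pr_filter_def by simp
  then show False using F0 G_def by simp
qed

lemma filt_up: "pr_filter I U F \<Longrightarrow> S \<in> F \<Longrightarrow> n \<in> carrier R \<Longrightarrow> S \<subseteq> pr I U n \<Longrightarrow> pr I U n \<in> F"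
  unfolding pr_filter_def using pr_prZ by blast

lemma C3:
  assumes F: "maximal_pr_filter I U F"
  shows "\<exists>m. maximalideal m R \<and> ideal_filter I U m = F"
proof -
  interpret cring R by (rule cring_R)
  have Ff: "pr_filter I U F" using F unfolding maximal_pr_filter_def by blast
  have FZ: "F \<subseteq> prZ I U" and F0: "{} \<notin> F"
    and Fint: "\<And>S T. S \<in> F \<Longrightarrow> T \<in> F \<Longrightarrow> S \<inter> T \<in> F"
    using Ff unfolding pr_filter_def by blast+
  obtain S0 where S0: "S0 \<in> F" using F_nonempty[OF F] by blast
  define m where "m = {n \<in> carrier R. pr I U n \<in> F}"
  have mc: "m \<subseteq> carrier R" unfolding m_def by blast
  have zm: "\<zero>\<^bsub>R\<^esub> \<in> m"
  proof -
    have "S0 \<subseteq> pr I U \<zero>\<^bsub>R\<^esub>" using S0 FZ pr_sub pr_zero unfolding prZ_def by blast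
    then show ?thesis unfolding m_def using filt_up[OF Ff S0] by simp
  qed
  have addm: "a \<oplus>\<^bsub>R\<^esub> b \<in> m" if "a \<in> m" "b \<in> m" for a b
  proof -
    have ab: "a \<in> carrier R" "b \<in> carrier R" "pr I U a \<in> F" "pr I U b \<in> F" using that unfolding m_def by auto
    have "pr I U a \<inter> pr I U b \<subseteq> pr I U (a \<oplus>\<^bsub>R\<^esub> b)"
    proof
      fix p assume "p \<in> pr I U a \<inter> pr I U b"
      then have p: "p \<in> P" "dv p a" "dv p b" unfolding pr_def by auto
      have pc: "p \<in> carrier R" using p(1) hprimes_carrier by blast
      show "p \<in> pr I U (a \<oplus>\<^bsub>R\<^esub> b)" unfolding pr_def using p dv_add[OF pc p(2) p(3)] by simp
    qed
    moreover have "a \<oplus>\<^bsub>R\<^esub> b \<in> carrier R" using ab by simp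
    ultimately show ?thesis unfolding m_def using filt_up[OF Ff Fint[OF ab(3,4)]] by simp
  qed
  have negm: "\<ominus>\<^bsub>R\<^esub> a \<in> m" if "a \<in> m" for a
  proof -
    have ab: "a \<in> carrier R" "pr I U a \<in> F" using that unfolding m_def by auto
    have "pr I U a \<subseteq> pr I U (\<ominus>\<^bsub>R\<^esub> a)"
    proof
      fix p assume "p \<in> pr I U a"
      then have p: "p \<in> P" "dv p a" unfolding pr_def by auto
      have pc: "p \<in> carrier R" using p(1) hprimes_carrier by blast
      show "p \<in> pr I U (\<ominus>\<^bsub>R\<^esub> a)" unfolding pr_def using p dv_neg[OF pc p(2)] by simp
    qed
    moreover have "\<ominus>\<^bsub>R\<^esub> a \<in> carrier R" using ab by simp
    ultimately show ?thesis unfolding m_def using filt_up[OF Ff ab(2)] by simp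
  qed
  have mulm: "x \<otimes>\<^bsub>R\<^esub> a \<in> m" if "a \<in> m" "x \<in> carrier R" for a x
  proof -
    have ab: "a \<in> carrier R" "pr I U a \<in> F" using that unfolding m_def by auto
    have "pr I U a \<subseteq> pr I U (x \<otimes>\<^bsub>R\<^esub> a)"
    proof
      fix p assume "p \<in> pr I U a"
      then have p: "p \<in> P" "dv p a" unfolding pr_def by auto
      have pc: "p \<in> carrier R" using p(1) hprimes_carrier by blast
      show "p \<in> pr I U (x \<otimes>\<^bsub>R\<^esub> a)" unfolding pr_def using p dv_mult[OF pc p(2) that(2)] by simp
    qed
    moreover have "x \<otimes>\<^bsub>R\<^esub> a \<in> carrier R" using ab that(2) by simp
    ultimately show ?thesis unfolding m_def using filt_up[OF Ff ab(2)] by simp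
  qed
  have im: "ideal m R"
  proof (rule idealI)
    show "ring R" by (rule ring_axioms)
    show "subgroup m (add_monoid R)"
    proof (rule add.subgroupI)
      show "m \<subseteq> carrier R" using mc by simp
      show "m \<noteq> {}" using zm by blast
    next
      fix a assume "a \<in> m"
      then show "\<ominus>\<^bsub>R\<^esub> a \<in> m" using negm by simp
    next
      fix a b assume "a \<in> m" "b \<in> m"
      then show "a \<oplus>\<^bsub>R\<^esub> b \<in> m" using addm by simp
    qed
  next
    fix a x assume "a \<in> m" "x \<in> carrier R"
    then show "x \<otimes>\<^bsub>R\<^esub> a \<in> m" by (rule mulm)
  next
    fix a x assume ax: "a \<in> m" "x \<in> carrier R"
    then have "a \<otimes>\<^bsub>R\<^esub> x = x \<otimes>\<^bsub>R\<^esub> a" using mc by (intro m_comm) auto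
    then show "a \<otimes>\<^bsub>R\<^esub> x \<in> m" using mulm[OF ax] by simp
  qed
  have onem: "\<one>\<^bsub>R\<^esub> \<notin> m" unfolding m_def using pr_one F0 by simp
  have mm: "maximalideal m R"
  proof (rule maximalidealI[OF im])
    show "carrier R \<noteq> m" using onem by auto
  next
    fix J assume J: "ideal J R" "m \<subseteq> J" "J \<subseteq> carrier R"
    show "J = m \<or> J = carrier R"
    proof (cases "J = m")
      case True then show ?thesis by simp
    next
      case Jm: False
      then obtain k where k: "k \<in> J" "k \<notin> m" using J(2) by blast
      have kc: "k \<in> carrier R" using k(1) J(3) by blast
      have kF: "pr I U k \<notin> F" using k(2) kc unfolding m_def by simp
      define G where "G = {T \<in> prZ I U. \<exists>S\<in>F. S \<inter> pr I U k \<subseteq> T}"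
      have "J = carrier R"
      proof (cases "{} \<in> G")
        case True
        then obtain S where S: "S \<in> F" "S \<inter> pr I U k \<subseteq> {}" unfolding G_def by blast
        then obtain n where n: "n \<in> carrier R" "S = pr I U n" using FZ unfolding prZ_def by blast
        have nm: "n \<in> m" unfolding m_def using n S(1) by simp
        obtain d u v where d: "d \<in> carrier R" "u \<in> carrier R" "v \<in> carrier R"
          "d = u \<otimes>\<^bsub>R\<^esub> n \<oplus>\<^bsub>R\<^esub> v \<otimes>\<^bsub>R\<^esub> k" "pr I U d = pr I U n \<inter> pr I U k"
          by (rule gcd_ex[OF n(1) kc])
        have "pr I U d = {}" using d(5) S(2) n(2) by simp
        then have du: "d \<in> Units R" using pr_empty d(1) by blast
        have "u \<otimes>\<^bsub>R\<^esub> n \<in> J" using nm J(2) d(2) by (intro ideal.I_l_closed[OF J(1)]) auto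
        moreover have "v \<otimes>\<^bsub>R\<^esub> k \<in> J" using k(1) d(3) by (rule ideal.I_l_closed[OF J(1)])
        ultimately have "u \<otimes>\<^bsub>R\<^esub> n \<oplus>\<^bsub>R\<^esub> v \<otimes>\<^bsub>R\<^esub> k \<in> J"
          by (rule additive_subgroup.a_closed[OF ideal.axioms(1)[OF J(1)]])
        then have "d \<in> J" using d(4) by simp
        then show ?thesis using unit_in_ideal[OF J(1) _ du] by blast
      next
        case False
        have Gf: "pr_filter I U G" unfolding pr_filter_def
        proof (intro conjI ballI impI)
          show "G \<subseteq> prZ I U" unfolding G_def by blast
          show "{} \<notin> G" by (rule False)
        next
          fix T1 T2 assume "T1 \<in> G" "T2 \<in> G"
          then obtain S1 S2 where T: "T1 \<in> prZ I U" "T2 \<in> prZ I U" "S1 \<in> F" "S2 \<in> F"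
            "S1 \<inter> pr I U k \<subseteq> T1" "S2 \<inter> pr I U k \<subseteq> T2" unfolding G_def by blast
          have "S1 \<inter> S2 \<in> F" using Fint T(3,4) by blast
          moreover have "(S1 \<inter> S2) \<inter> pr I U k \<subseteq> T1 \<inter> T2" using T(5,6) by blast
          moreover have "T1 \<inter> T2 \<in> prZ I U" using prZ_Int T(1,2) by blast
          ultimately show "T1 \<inter> T2 \<in> G" unfolding G_def by blast
        next
          fix T1 T2 assume "T1 \<in> G" "T2 \<in> prZ I U" "T1 \<subseteq> T2"
          then show "T2 \<in> G" unfolding G_def by blast
        qed
        have FG: "F \<subseteq> G"
        proof
          fix S assume "S \<in> F"
          then show "S \<in> G" unfolding G_def using FZ by blast
        qed
        have "G = F" using F Gf FG unfolding maximal_pr_filter_def by blast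
        moreover have "pr I U k \<in> G" unfolding G_def using pr_prZ[OF kc] S0 by blast
        ultimately show ?thesis using kF by simp
      qed
      then show ?thesis by simp
    qed
  qed
  have "ideal_filter I U m = F"
  proof
    show "ideal_filter I U m \<subseteq> F" unfolding ideal_filter_def m_def by blast
    show "F \<subseteq> ideal_filter I U m"
    proof
      fix S assume S: "S \<in> F"
      then obtain n where n: "n \<in> carrier R" "S = pr I U n" using FZ unfolding prZ_def by blast
      then have "n \<in> m" unfolding m_def using S by simp
      then show "S \<in> ideal_filter I U m" unfolding ideal_filter_def using n(2) by blast
    qed
  qed
  then show ?thesis using mm by blast
qed

lemma C4:
  assumes m: "maximalideal m R"
  shows "principal_pr_filter I U (ideal_filter I U m) \<longleftrightarrow> (\<exists>p\<in>P. m = PIdl\<^bsub>R\<^esub> p)"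
proof -
  interpret cring R by (rule cring_R)
  interpret maximalideal m R by (rule m)
  have mc: "m \<subseteq> carrier R" using Icarr by blast
  show ?thesis
  proof
    assume "principal_pr_filter I U (ideal_filter I U m)"
    then obtain n where n: "n \<in> carrier R" and nS: "\<forall>S\<in>prZ I U. S \<in> pr I U ` m \<longleftrightarrow> pr I U n \<subseteq> S"
      unfolding principal_pr_filter_def ideal_filter_def by blast
    have "pr I U n \<in> pr I U ` m" using nS pr_prZ[OF n] by blast
    then obtain n' where n': "n' \<in> m" "pr I U n = pr I U n'" by blast
    have "pr I U n \<noteq> {}"
    proof
      assume "pr I U n = {}"
      then have "n' \<in> Units R" using pr_empty n' mc by auto
      then have "m = carrier R" using unit_in_ideal[OF is_ideal n'(1)] by blast
      then show False using I_notcarr by simp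
    qed
    then obtain p where p: "p \<in> pr I U n" by blast
    then have pP: "p \<in> P" and pn: "dv p n" unfolding pr_def by auto
    have pc: "p \<in> carrier R" using pP hprimes_carrier by blast
    have pm: "p \<in> m"
    proof (rule ccontr)
      assume "p \<notin> m"
      then obtain x a where x: "x \<in> m" "a \<in> carrier R" "\<one>\<^bsub>R\<^esub> = x \<oplus>\<^bsub>R\<^esub> a \<otimes>\<^bsub>R\<^esub> p"
        using key_max[OF m pc] by blast
      have xc: "x \<in> carrier R" using x(1) mc by blast
      have "pr I U x \<in> pr I U ` m" using x(1) by (rule imageI)
      then have "pr I U n \<subseteq> pr I U x" using nS pr_prZ[OF xc] by blast
      then have "p \<in> pr I U x" using p by blast
      moreover have "p \<in> pr I U p" unfolding pr_def using pP dv_refl[OF pc] by simp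
      ultimately show False using coprime_pr[OF xc x(2) pc x(3)] by blast
    qed
    have "m = PIdl\<^bsub>R\<^esub> p"
    proof
      show "PIdl\<^bsub>R\<^esub> p \<subseteq> m" by (rule cgenideal_minimal[OF is_ideal pm])
      show "m \<subseteq> PIdl\<^bsub>R\<^esub> p"
      proof
        fix k assume km: "k \<in> m"
        have kc: "k \<in> carrier R" using km mc by blast
        obtain d u v where d: "d \<in> carrier R" "u \<in> carrier R" "v \<in> carrier R"
          "dv d p" "dv d k" "d = u \<otimes>\<^bsub>R\<^esub> p \<oplus>\<^bsub>R\<^esub> v \<otimes>\<^bsub>R\<^esub> k"
          using bezout_R[OF pc kc] by blast
        have "u \<otimes>\<^bsub>R\<^esub> p \<in> m" using pm d(2) by (rule I_l_closed)
        moreover have "v \<otimes>\<^bsub>R\<^esub> k \<in> m" using km d(3) by (rule I_l_closed)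
        ultimately have "u \<otimes>\<^bsub>R\<^esub> p \<oplus>\<^bsub>R\<^esub> v \<otimes>\<^bsub>R\<^esub> k \<in> m" by (rule a_closed)
        then have dm: "d \<in> m" using d(6) by simp
        have dcases: "d \<in> {\<one>\<^bsub>R\<^esub>, \<ominus>\<^bsub>R\<^esub> \<one>\<^bsub>R\<^esub>, p, \<ominus>\<^bsub>R\<^esub> p}"
          by (rule hp_div[OF pP d(1) d(4)])
        have "dv p k"
        proof -
          have "d \<notin> Units R"
          proof
            assume "d \<in> Units R"
            then have "m = carrier R" using unit_in_ideal[OF is_ideal dm] by blast
            then show False using I_notcarr by simp
          qed
          then have "d \<noteq> \<one>\<^bsub>R\<^esub>" "d \<noteq> \<ominus>\<^bsub>R\<^esub> \<one>\<^bsub>R\<^esub>" by auto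
          then have "d = p \<or> d = \<ominus>\<^bsub>R\<^esub> p" using dcases by simp
          then show ?thesis
          proof
            assume "d = p" then show ?thesis using d(5) by simp
          next
            assume "d = \<ominus>\<^bsub>R\<^esub> p" then show ?thesis using d(5) dv_negL[OF pc] by simp
          qed
        qed
        then obtain z where z: "z \<in> carrier R" "k = z \<otimes>\<^bsub>R\<^esub> p" by (rule dvE)
        then show "k \<in> PIdl\<^bsub>R\<^esub> p" unfolding cgenideal_def by blast
      qed
    qed
    then show "\<exists>p\<in>P. m = PIdl\<^bsub>R\<^esub> p" using pP by blast
  next
    assume "\<exists>p\<in>P. m = PIdl\<^bsub>R\<^esub> p"
    then obtain p where pP: "p \<in> P" and mp: "m = PIdl\<^bsub>R\<^esub> p" by blast
    have pc: "p \<in> carrier R" using pP hprimes_carrier by blast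
    have "S \<in> pr I U ` m \<longleftrightarrow> pr I U p \<subseteq> S" if S: "S \<in> prZ I U" for S
    proof
      assume "S \<in> pr I U ` m"
      then obtain y where y: "y \<in> m" "S = pr I U y" by blast
      then obtain z where z: "z \<in> carrier R" "y = z \<otimes>\<^bsub>R\<^esub> p" unfolding mp cgenideal_def by blast
      show "pr I U p \<subseteq> S"
      proof
        fix q assume "q \<in> pr I U p"
        then have q: "q \<in> P" "dv q p" unfolding pr_def by auto
        have qc: "q \<in> carrier R" using q(1) hprimes_carrier by blast
        have "dv q (z \<otimes>\<^bsub>R\<^esub> p)" by (rule dv_mult[OF qc q(2) z(1)])
        then show "q \<in> S" unfolding y(2) z(2) pr_def using q(1) by simp
      qed
    next
      assume sub: "pr I U p \<subseteq> S"
      from S obtain k where k: "k \<in> carrier R" "S = pr I U k" unfolding prZ_def by blast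
      have "p \<in> pr I U p" unfolding pr_def using pP dv_refl[OF pc] by simp
      then have "dv p k" using sub k(2) unfolding pr_def by auto
      then obtain z where z: "z \<in> carrier R" "k = z \<otimes>\<^bsub>R\<^esub> p" by (rule dvE)
      then have "k \<in> m" unfolding mp cgenideal_def by blast
      then show "S \<in> pr I U ` m" using k(2) by blast
    qed
    then show "principal_pr_filter I U (ideal_filter I U m)"
      unfolding principal_pr_filter_def ideal_filter_def using pc by blast
  qed
qed

end

theorem theorem4p6:
  fixes I :: "'i set" and U :: "'i set set"
  assumes "countable I" and "infinite I" and "nonprincipal_ultrafilter_on I U"
  shows "bij_betw (ideal_filter I U) {m. maximalideal m (zstar I U)}
           {F. maximal_pr_filter I U F}
       \<and> (\<forall>m. maximalideal m (zstar I U) \<longrightarrow>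
            (principal_pr_filter I U (ideal_filter I U m) \<longleftrightarrow>
             (\<exists>p\<in>hprimes I U. m = PIdl\<^bsub>zstar I U\<^esub> p)))"
proof -
  have up: "UP I U" by (rule UP.intro) (use assms(3) in \<open>simp add: nonprincipal_ultrafilter_on_def\<close>)
  have inj: "inj_on (ideal_filter I U) {m. maximalideal m (zstar I U)}"
  proof (rule inj_onI)
    fix m1 m2 assume "m1 \<in> {m. maximalideal m (zstar I U)}" "m2 \<in> {m. maximalideal m (zstar I U)}"
      and eq: "ideal_filter I U m1 = ideal_filter I U m2"
    then have m: "maximalideal m1 (zstar I U)" "maximalideal m2 (zstar I U)" by auto
    show "m1 = m2"
      using UP.C2[OF up m(1) m(2) eq] UP.C2[OF up m(2) m(1) eq[symmetric]] by (rule subset_antisym)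
  qed
  have img: "ideal_filter I U ` {m. maximalideal m (zstar I U)} = {F. maximal_pr_filter I U F}"
  proof
    show "ideal_filter I U ` {m. maximalideal m (zstar I U)} \<subseteq> {F. maximal_pr_filter I U F}"
      using UP.C1[OF up] by blast
    show "{F. maximal_pr_filter I U F} \<subseteq> ideal_filter I U ` {m. maximalideal m (zstar I U)}"
    proof
      fix F assume "F \<in> {F. maximal_pr_filter I U F}"
      then obtain m where "maximalideal m (zstar I U)" "ideal_filter I U m = F"
        using UP.C3[OF up] by blast
      then show "F \<in> ideal_filter I U ` {m. maximalideal m (zstar I U)}" by blast
    qed
  qed
  show ?thesis
    unfolding bij_betw_def using inj img UP.C4[OF up] by blast
qed

end
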